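(* Let $\mathbb{K}$ be a semiring and let $\mathcal{A}=(Q,A,E,I,T)$ and $\mathcal{B}=(R,A,F,J,U)$ be two two-way $\mathbb{K}$-automata. If $\mathcal{A}$ is a covering (respectively an in-covering) of $\mathcal{B}$ via the surjective morphism $\varphi:Q\to R$, then the map sending a computation $((p_0,i_0),\dots,(p_k,i_k))$ of $\mathcal{A}$ to $((\varphi(p_0),i_0),\dots,(\varphi(p_k),i_k))$ is a bijection between the computations of $\mathcal{A}$ and the computations of $\mathcal{B}$, and every computation of $\mathcal{A}$ and its image in $\mathcal{B}$ have the same label and the same weight.
   Context: A semiring $\mathbb{K}$ has addition $\oplus$ and multiplication $\otimes$ with the usual axioms. With $A_{\vdash\dashv}=A\cup\{\vdash,\dashv\}$ ($\vdash,\dashv$ fresh end-markers), a two-way $\mathbb{K}$-automaton $(Q,A,E,I,T)$ has finite state set $Q$, partial functions $I,T:Q\to\mathbb{K}$ (supports $\underline I$, $\underline T$ are the initial/final states), and a partial function $E:Q\times(A_{\vdash\dashv}\times\{-1,+1\})\times Q\to\mathbb{K}$ whose support $\underline E$ (the transitions) contains no $(p,\vdash,-1,q)$ nor $(p,\dashv,+1,q)$. For $t=(p,a,d,q)$: $\sigma(t)=p$, $\tau(t)=q$, $\lambda(t)=a$, $\delta(t)=d$. For $w=w_1\cdots w_n$ let $w_0=\vdash$, $w_{n+1}=\dashv$. A computation on $w$ (its label) is a sequence of configurations $((p_0,i_0),\dots,(p_k,i_k))$, $p_j\in Q$, $i_j\in[0;n+1]$, with $i_0=1$, $i_k=n+1$,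 $p_0\in\underline I$, $p_k\in\underline T$, and for each $j<k$ a transition $t_j\in\underline E$ with $\sigma(t_j)=p_j$, $\tau(t_j)=p_{j+1}$, $\lambda(t_j)=w_{i_j}$, $i_{j+1}=i_j+\delta(t_j)$; its weight is $I(p_0)\otimes\bigotimes_{j=0}^{k-1}E(t_j)\otimes T(p_k)$. A morphism from $\mathcal{A}=(Q,A,E,I,T)$ to $\mathcal{B}=(R,A,F,J,U)$ is a map $\varphi:Q\to R$ such that (i) $J(\varphi(p))=I(p)$ for all $p\in\underline I$; (ii) $U(\varphi(p))=T(p)$ for all $p\in\underline T$; (iii) for every $t=(p,a,d,q)\in\underline E$, $\tilde\varphi(t)=(\varphi(p),a,d,\varphi(q))\in\underline F$ and $F(\tilde\varphi(t))=E(t)$. It is surjective if $\varphi(Q)=R$, $\varphi(\underline I)=\underline J$, $\varphi(\underline T)=\underline U$ and $\tilde\varphi(\underline E)=\underline F$. $\mathcal{A}$ is a covering of $\mathcal{B}$ if there is a surjective morphism $\varphi$ with: (i) for all $r\in\underline U$, $\varphi^{-1}(r)\subseteq\underline T$; (ii) for all $r\in\underline J$ there is exactly one $p\in\varphi^{-1}(r)\cap\underline I$; (iii) for all $t\in\underline F$ and all $p\in\varphi^{-1}(\sigma(t))$ there is exactly one $t'\in\underline E$ with $\tilde\varphi(t')=t$ and $\sigma(t')=p$. $\mathcal{A}$ is an in-covering of $\mathcal{B}$ if there is a surjective morphism $\varphi$ with: (i) for all $r\in\underline J$, $\varphi^{-1}(r)\subseteq\underline I$; (ii) for all $r\in\underline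 U$ there is exactly one $p\in\varphi^{-1}(r)\cap\underline T$; (iii) for all $t\in\underline F$ and all $q\in\varphi^{-1}(\tau(t))$ there is exactly one $t'\in\underline E$ with $\tilde\varphi(t')=t$ and $\tau(t')=q$. *)

theory Defs
  imports Main
begin

datatype 'a marked = LeftEnd | RightEnd | Letter 'a

datatype dir = Back | Fwd

fun dval :: "dir \<Rightarrow> int" where
  "dval Back = -1" | "dval Fwd = 1"

text \<open>A two-way K-automaton (Q, A, E, I, T); partial functions are option-valued maps,
  their supports are their domains.\<close>
record ('q, 'a, 'k) twa =
  states :: "'q set"
  alph   :: "'a set"
  trans  :: "'q \<times> 'a marked \<times> dir \<times> 'q \<Rightarrow> 'k option"
  init   :: "'q \<Rightarrow> 'k option"
  fin    :: "'q \<Rightarrow> 'k option"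

definition marked_alph :: "'a set \<Rightarrow> 'a marked set" where
  "marked_alph A = {LeftEnd, RightEnd} \<union> Letter ` A"

definition wf_twa :: "('q, 'a, 'k) twa \<Rightarrow> bool" where
  "wf_twa \<A> \<longleftrightarrow> finite (states \<A>)
     \<and> dom (init \<A>) \<subseteq> states \<A> \<and> dom (fin \<A>) \<subseteq> states \<A>
     \<and> dom (trans \<A>) \<subseteq> states \<A> \<times> marked_alph (alph \<A>) \<times> UNIV \<times> states \<A>
     \<and> (\<forall>p q. (p, LeftEnd, Back, q) \<notin> dom (trans \<A>))
     \<and> (\<forall>p q. (p, RightEnd, Fwd, q) \<notin> dom (trans \<A>))"

definition letter_at :: "'a list \<Rightarrow> nat \<Rightarrow> 'a marked" where
  "letter_at w i = (if i = 0 then LeftEnd else if i = length w + 1 then RightEnd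
                    else Letter (w ! (i - 1)))"

text \<open>A computation is a pair (w, cs) of its label w and its sequence of configurations cs.\<close>
definition is_comp :: "('q, 'a, 'k) twa \<Rightarrow> 'a list \<Rightarrow> ('q \<times> nat) list \<Rightarrow> bool" where
  "is_comp \<A> w cs \<longleftrightarrow> set w \<subseteq> alph \<A> \<and> cs \<noteq> []
     \<and> (\<forall>c\<in>set cs. fst c \<in> states \<A> \<and> snd c \<le> length w + 1)
     \<and> snd (hd cs) = 1 \<and> snd (last cs) = length w + 1
     \<and> fst (hd cs) \<in> dom (init \<A>) \<and> fst (last cs) \<in> dom (fin \<A>)
     \<and> (\<forall>j < length cs - 1. \<exists>d.
           (fst (cs ! j), letter_at w (snd (cs ! j)), d, fst (cs ! Suc j)) \<in> dom (trans \<A>)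
           \<and> int (snd (cs ! Suc j)) = int (snd (cs ! j)) + dval d)"

definition comps :: "('q, 'a, 'k) twa \<Rightarrow> ('a list \<times> ('q \<times> nat) list) set" where
  "comps \<A> = {(w, cs). is_comp \<A> w cs}"

definition label :: "'a list \<times> ('q \<times> nat) list \<Rightarrow> 'a list" where
  "label c = fst c"

text \<open>The transition used to go from configuration c to configuration c' on w
  (it is uniquely determined by c, c' and w).\<close>
definition step_trans :: "'a list \<Rightarrow> 'q \<times> nat \<Rightarrow> 'q \<times> nat \<Rightarrow> 'q \<times> 'a marked \<times> dir \<times> 'q" where
  "step_trans w c c' = (fst c, letter_at w (snd c),
                        (if snd c' > snd c then Fwd else Back), fst c')"

definition weight :: "('q, 'a, 'k::semiring_1) twa \<Rightarrow> 'a list \<times> ('q \<times> nat) list \<Rightarrow> 'k" where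
  "weight \<A> c = (let w = fst c; cs = snd c in
     the (init \<A> (fst (hd cs)))
     * prod_list (map (\<lambda>(x, y). the (trans \<A> (step_trans w x y))) (zip cs (tl cs)))
     * the (fin \<A> (fst (last cs))))"

definition map_trans :: "('q \<Rightarrow> 'r) \<Rightarrow> 'q \<times> 'a marked \<times> dir \<times> 'q \<Rightarrow> 'r \<times> 'a marked \<times> dir \<times> 'r" where
  "map_trans \<phi> t = (case t of (p, a, d, q) \<Rightarrow> (\<phi> p, a, d, \<phi> q))"

definition is_morphism :: "('q, 'a, 'k) twa \<Rightarrow> ('r, 'a, 'k) twa \<Rightarrow> ('q \<Rightarrow> 'r) \<Rightarrow> bool" where
  "is_morphism \<A> \<B> \<phi> \<longleftrightarrow> \<phi> ` states \<A> \<subseteq> states \<B>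
     \<and> (\<forall>p\<in>dom (init \<A>). init \<B> (\<phi> p) = init \<A> p)
     \<and> (\<forall>p\<in>dom (fin \<A>). fin \<B> (\<phi> p) = fin \<A> p)
     \<and> (\<forall>t\<in>dom (trans \<A>). trans \<B> (map_trans \<phi> t) = trans \<A> t)"

definition surj_morphism :: "('q, 'a, 'k) twa \<Rightarrow> ('r, 'a, 'k) twa \<Rightarrow> ('q \<Rightarrow> 'r) \<Rightarrow> bool" where
  "surj_morphism \<A> \<B> \<phi> \<longleftrightarrow> is_morphism \<A> \<B> \<phi>
     \<and> \<phi> ` states \<A> = states \<B>
     \<and> \<phi> ` dom (init \<A>) = dom (init \<B>)
     \<and> \<phi> ` dom (fin \<A>) = dom (fin \<B>)
     \<and> map_trans \<phi> ` dom (trans \<A>) = dom (trans \<B>)"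

definition src :: "'q \<times> 'b \<times> 'c \<times> 'q \<Rightarrow> 'q" where "src t = fst t"
definition tgt :: "'q \<times> 'b \<times> 'c \<times> 'q \<Rightarrow> 'q" where "tgt t = snd (snd (snd t))"

definition covering :: "('q, 'a, 'k) twa \<Rightarrow> ('r, 'a, 'k) twa \<Rightarrow> ('q \<Rightarrow> 'r) \<Rightarrow> bool" where
  "covering \<A> \<B> \<phi> \<longleftrightarrow> surj_morphism \<A> \<B> \<phi>
     \<and> (\<forall>r\<in>dom (fin \<B>). {p\<in>states \<A>. \<phi> p = r} \<subseteq> dom (fin \<A>))
     \<and> (\<forall>r\<in>dom (init \<B>). \<exists>!p. p \<in> states \<A> \<and> \<phi> p = r \<and> p \<in> dom (init \<A>))
     \<and> (\<forall>t\<in>dom (trans \<B>). \<forall>p\<in>states \<A>. \<phi> p = src t \<longrightarrow>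
          (\<exists>!t'. t' \<in> dom (trans \<A>) \<and> map_trans \<phi> t' = t \<and> src t' = p))"

definition in_covering :: "('q, 'a, 'k) twa \<Rightarrow> ('r, 'a, 'k) twa \<Rightarrow> ('q \<Rightarrow> 'r) \<Rightarrow> bool" where
  "in_covering \<A> \<B> \<phi> \<longleftrightarrow> surj_morphism \<A> \<B> \<phi>
     \<and> (\<forall>r\<in>dom (init \<B>). {p\<in>states \<A>. \<phi> p = r} \<subseteq> dom (init \<A>))
     \<and> (\<forall>r\<in>dom (fin \<B>). \<exists>!p. p \<in> states \<A> \<and> \<phi> p = r \<and> p \<in> dom (fin \<A>))
     \<and> (\<forall>t\<in>dom (trans \<B>). \<forall>q\<in>states \<A>. \<phi> q = tgt t \<longrightarrow>
          (\<exists>!t'. t' \<in> dom (trans \<A>) \<and> map_trans \<phi> t' = t \<and> tgt t' = q))"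

definition comp_image :: "('q \<Rightarrow> 'r) \<Rightarrow> 'a list \<times> ('q \<times> nat) list \<Rightarrow> 'a list \<times> ('r \<times> nat) list" where
  "comp_image \<phi> c = (fst c, map (\<lambda>(p, i). (\<phi> p, i)) (snd c))"

end

theory Submission
  imports Defs
begin

definition fm :: "('q \<Rightarrow> 'r) \<Rightarrow> 'q \<times> nat \<Rightarrow> 'r \<times> nat" where
  "fm \<phi> c = (\<phi> (fst c), snd c)"

lemma fm_eq: "(\<lambda>(p, i). (\<phi> p, i)) = fm \<phi>"
  by (auto simp: fm_def)

lemma fm_simps[simp]: "fst (fm \<phi> c) = \<phi> (fst c)" "snd (fm \<phi> c) = snd c"
  by (auto simp: fm_def)

definition stepok :: "('q, 'a, 'k) twa \<Rightarrow> 'a list \<Rightarrow> 'q \<times> nat \<Rightarrow> 'q \<times> nat \<Rightarrow> bool" where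
  "stepok A w c c' \<longleftrightarrow> (\<exists>d. (fst c, letter_at w (snd c), d, fst c') \<in> dom (trans A)
           \<and> int (snd c') = int (snd c) + dval d)"

lemma succ_nth: "(\<forall>j < length xs - 1. P (xs!j) (xs!Suc j)) = successively P xs"
proof (induction P xs rule: successively.induct)
  case (3 P x y xs)
  have "(\<forall>j < length (x#y#xs) - 1. P ((x#y#xs)!j) ((x#y#xs)!Suc j))
      = (P x y \<and> (\<forall>j < length (y#xs) - 1. P ((y#xs)!j) ((y#xs)!Suc j)))"
    by (auto simp: less_Suc_eq_0_disj)
  then show ?case using 3 by simp
qed auto

lemma is_comp_alt: "is_comp A w cs \<longleftrightarrow> set w \<subseteq> alph A \<and> cs \<noteq> []
     \<and> (\<forall>c\<in>set cs. fst c \<in> states A \<and> snd c \<le> length w + 1)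
     \<and> snd (hd cs) = 1 \<and> snd (last cs) = length w + 1
     \<and> fst (hd cs) \<in> dom (init A) \<and> fst (last cs) \<in> dom (fin A)
     \<and> successively (stepok A w) cs"
  unfolding is_comp_def succ_nth[symmetric] stepok_def by simp

lemma dval_inj: "dval d1 = dval d2 \<Longrightarrow> d1 = d2"
  by (cases d1; cases d2) auto

lemma stepok_img:
  assumes "is_morphism A B \<phi>" "stepok A w x y"
  shows "stepok B w (fm \<phi> x) (fm \<phi> y)"
proof -
  obtain d where d: "(fst x, letter_at w (snd x), d, fst y) \<in> dom (trans A)"
    "int (snd y) = int (snd x) + dval d" using assms(2) unfolding stepok_def by blast
  have "trans B (map_trans \<phi> (fst x, letter_at w (snd x), d, fst y)) = trans A (fst x, letter_at w (snd x), d, fst y)"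
    using assms(1) d(1) unfolding is_morphism_def by blast
  then have "(\<phi> (fst x), letter_at w (snd x), d, \<phi> (fst y)) \<in> dom (trans B)"
    using d(1) by (auto simp: map_trans_def)
  then show ?thesis using d(2) unfolding stepok_def by auto
qed

lemma succ_zip: "successively P cs \<Longrightarrow> (x, y) \<in> set (zip cs (tl cs)) \<Longrightarrow> P x y"
proof (induction P cs rule: successively.induct)
  case (3 P x y xs)
  then show ?case by auto
qed auto

lemma step_trans_stepok:
  assumes "stepok A w x y"
  shows "step_trans w x y \<in> dom (trans A)"
proof -
  obtain d where d: "(fst x, letter_at w (snd x), d, fst y) \<in> dom (trans A)"
    "int (snd y) = int (snd x) + dval d" using assms unfolding stepok_def by blast
  have "(if snd y > snd x then Fwd else Back) = d" using d(2) by (cases d) auto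
  then show ?thesis using d(1) unfolding step_trans_def by simp
qed

lemma comp_image_eq: "comp_image \<phi> (w, cs) = (w, map (fm \<phi>) cs)"
  by (simp add: comp_image_def fm_eq)

lemma hd_fm: "cs \<noteq> [] \<Longrightarrow> hd (map (fm \<phi>) cs) = (\<phi> (fst (hd cs)), snd (hd cs))"
  by (simp add: hd_map fm_def)

lemma last_fm: "cs \<noteq> [] \<Longrightarrow> last (map (fm \<phi>) cs) = (\<phi> (fst (last cs)), snd (last cs))"
  by (simp add: last_map fm_def)

lemma is_compD:
  assumes "is_comp A w cs"
  shows "set w \<subseteq> alph A" "cs \<noteq> []" "\<forall>c\<in>set cs. fst c \<in> states A"
    "\<forall>c\<in>set cs. snd c \<le> length w + 1" "snd (hd cs) = 1" "snd (last cs) = length w + 1"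
    "fst (hd cs) \<in> dom (init A)" "fst (last cs) \<in> dom (fin A)" "successively (stepok A w) cs"
  using assms unfolding is_comp_alt by auto

lemma hd_states: "is_comp A w cs \<Longrightarrow> fst (hd cs) \<in> states A"
  using is_compD(2,3) by (metis list.set_sel(1))
lemma last_states: "is_comp A w cs \<Longrightarrow> fst (last cs) \<in> states A"
  using is_compD(2,3) by (metis last_in_set)

lemma comp_into:
  assumes "is_morphism A B \<phi>" "is_comp A w cs" "alph A = alph B"
  shows "is_comp B w (map (fm \<phi>) cs)"
proof -
  have m: "\<phi> ` states A \<subseteq> states B" "\<forall>p\<in>dom (init A). init B (\<phi> p) = init A p"
     "\<forall>p\<in>dom (fin A). fin B (\<phi> p) = fin A p" using assms(1) unfolding is_morphism_def by auto
  note D = is_compD[OF assms(2)]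
  have s: "successively (stepok B w) (map (fm \<phi>) cs)"
    unfolding successively_map using D(9) stepok_img[OF assms(1)] by (rule successively_mono)
  have ne: "map (fm \<phi>) cs \<noteq> []" using D(2) by simp
  have b1: "set w \<subseteq> alph B" using D(1) assms(3) by simp
  have b2: "\<forall>c\<in>set (map (fm \<phi>) cs). fst c \<in> states B \<and> snd c \<le> length w + 1"
  proof
    fix c assume "c \<in> set (map (fm \<phi>) cs)"
    then obtain x where x: "x \<in> set cs" "c = fm \<phi> x" by auto
    then show "fst c \<in> states B \<and> snd c \<le> length w + 1" using D(3,4) m(1) by auto
  qed
  have h: "hd (map (fm \<phi>) cs) = (\<phi> (fst (hd cs)), snd (hd cs))" using hd_fm[OF D(2)] .
  have l: "last (map (fm \<phi>) cs) = (\<phi> (fst (last cs)), snd (last cs))" using last_fm[OF D(2)] .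
  have b3: "snd (hd (map (fm \<phi>) cs)) = 1" "snd (last (map (fm \<phi>) cs)) = length w + 1"
    using h l D(5,6) by simp_all
  have i1: "init B (\<phi> (fst (hd cs))) = init A (fst (hd cs))" using m(2) D(7) by blast
  have i2: "fin B (\<phi> (fst (last cs))) = fin A (fst (last cs))" using m(3) D(8) by blast
  have b4: "fst (hd (map (fm \<phi>) cs)) \<in> dom (init B)" "fst (last (map (fm \<phi>) cs)) \<in> dom (fin B)"
    using h l i1 i2 D(7,8) by (simp_all add: domIff)
  show ?thesis unfolding is_comp_alt using b1 ne b2 b3 b4 s by - (intro conjI, assumption+)
qed

lemma weight_eq:
  assumes "is_morphism A B \<phi>" "is_comp A w cs"
  shows "weight B (w, map (fm \<phi>) cs) = weight A (w, cs)"
proof -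
  have c: "cs \<noteq> []" "fst (hd cs) \<in> dom (init A)" "fst (last cs) \<in> dom (fin A)"
     "successively (stepok A w) cs" using assms(2) unfolding is_comp_alt by auto
  have m: "\<forall>p\<in>dom (init A). init B (\<phi> p) = init A p"
     "\<forall>p\<in>dom (fin A). fin B (\<phi> p) = fin A p"
     "\<forall>t\<in>dom (trans A). trans B (map_trans \<phi> t) = trans A t"
    using assms(1) unfolding is_morphism_def by auto
  have z: "zip (map (fm \<phi>) cs) (tl (map (fm \<phi>) cs)) = map (\<lambda>(x,y). (fm \<phi> x, fm \<phi> y)) (zip cs (tl cs))"
    by (simp add: map_tl[symmetric] zip_map_map)
  have st: "step_trans w (fm \<phi> x) (fm \<phi> y) = map_trans \<phi> (step_trans w x y)" for x y
    by (simp add: step_trans_def map_trans_def)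
  have pw: "\<forall>(x,y)\<in>set (zip cs (tl cs)). the (trans B (step_trans w (fm \<phi> x) (fm \<phi> y))) = the (trans A (step_trans w x y))"
  proof (intro ballI, clarify)
    fix x y assume xy: "(x, y) \<in> set (zip cs (tl cs))"
    have "step_trans w x y \<in> dom (trans A)"
      using step_trans_stepok succ_zip[OF c(4) xy] by blast
    then show "the (trans B (step_trans w (fm \<phi> x) (fm \<phi> y))) = the (trans A (step_trans w x y))"
      using m(3) st by simp
  qed
  have "map (\<lambda>(x, y). the (trans B (step_trans w x y))) (zip (map (fm \<phi>) cs) (tl (map (fm \<phi>) cs)))
      = map (\<lambda>(x, y). the (trans A (step_trans w x y))) (zip cs (tl cs))"
    unfolding z map_map by (rule map_cong[OF refl]) (use pw in auto)
  then show ?thesis using c m unfolding weight_def by (simp add: hd_map last_map)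
qed


lemma ex1_eqD: "\<exists>!x. P x \<Longrightarrow> P a \<Longrightarrow> P b \<Longrightarrow> a = b"
  by blast

lemma covD3:
  assumes "covering A B \<phi>"
  shows "\<forall>t\<in>dom (trans B). \<forall>p\<in>states A. \<phi> p = src t \<longrightarrow>
          (\<exists>!t'. t' \<in> dom (trans A) \<and> map_trans \<phi> t' = t \<and> src t' = p)"
  using assms unfolding covering_def by (elim conjE) assumption

lemma incovD3:
  assumes "in_covering A B \<phi>"
  shows "\<forall>t\<in>dom (trans B). \<forall>q\<in>states A. \<phi> q = tgt t \<longrightarrow>
          (\<exists>!t'. t' \<in> dom (trans A) \<and> map_trans \<phi> t' = t \<and> tgt t' = q)"
  using assms unfolding in_covering_def by (elim conjE) assumption

lemma covD4: "covering A B \<phi> \<Longrightarrow> map_trans \<phi> ` dom (trans A) = dom (trans B)"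
  unfolding covering_def surj_morphism_def by (elim conjE) assumption

lemma incovD4: "in_covering A B \<phi> \<Longrightarrow> map_trans \<phi> ` dom (trans A) = dom (trans B)"
  unfolding in_covering_def surj_morphism_def by (elim conjE) assumption

lemma map_trans_eq: "map_trans \<phi> (p, a, d, q) = (\<phi> p, a, d, \<phi> q)"
  by (simp add: map_trans_def)

lemma wf_trans_states:
  assumes "wf_twa A" "(p, a, d, q) \<in> dom (trans A)"
  shows "p \<in> states A" "q \<in> states A"
  using assms unfolding wf_twa_def by blast+

lemma lift_cov:
  assumes cov: "covering A B \<phi>" and wf: "wf_twa A"
  shows "successively (stepok B w) rs \<Longrightarrow> rs \<noteq> [] \<Longrightarrow> p \<in> states A \<Longrightarrow> \<phi> p = fst (hd rs) \<Longrightarrow>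
    \<exists>cs. map (fm \<phi>) cs = rs \<and> fst (hd cs) = p \<and> (\<forall>c\<in>set cs. fst c \<in> states A)
       \<and> successively (stepok A w) cs"
proof (induction rs arbitrary: p)
  case Nil then show ?case by simp
next
  case (Cons x rs)
  show ?case
  proof (cases "rs = []")
    case True
    then show ?thesis using Cons.prems by (intro exI[of _ "[(p, snd x)]"]) (auto simp: fm_def)
  next
    case False
    then obtain y rs' where rs: "rs = y # rs'" by (cases rs) auto
    from Cons.prems(1) rs have st: "stepok B w x y" and sr: "successively (stepok B w) rs" by auto
    obtain d where d: "(fst x, letter_at w (snd x), d, fst y) \<in> dom (trans B)"
      "int (snd y) = int (snd x) + dval d" using st unfolding stepok_def by blast
    have "\<phi> p = src (fst x, letter_at w (snd x), d, fst y)" using Cons.prems(4) by (simp add: src_def)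
    note u = covD3[OF cov, rule_format, OF d(1) Cons.prems(3) this]
    then have "\<exists>t'. t' \<in> dom (trans A) \<and> map_trans \<phi> t' = (fst x, letter_at w (snd x), d, fst y) \<and> src t' = p"
      by (rule ex1_implies_ex)
    then obtain t' where t': "t' \<in> dom (trans A)" "map_trans \<phi> t' = (fst x, letter_at w (snd x), d, fst y)" "src t' = p"
      by blast
    obtain p' a' d' q where tq: "t' = (p', a', d', q)" by (cases t') auto
    have eqs: "p' = p" "a' = letter_at w (snd x)" "d' = d" "\<phi> q = fst y"
      using t'(2,3) tq by (auto simp: map_trans_eq src_def)
    have qS: "q \<in> states A" using wf_trans_states[OF wf] t'(1) tq by blast
    have "\<phi> q = fst (hd rs)" using eqs(4) rs by simp
    then obtain cs where cs: "map (fm \<phi>) cs = rs" "fst (hd cs) = q" "\<forall>c\<in>set cs. fst c \<in> states A"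
      "successively (stepok A w) cs" using Cons.IH[OF sr False qS] by blast
    have hcs: "hd cs = (q, snd y)" using cs(1,2) rs
      by (cases cs) (auto simp: fm_def)
    have "stepok A w (p, snd x) (hd cs)"
      unfolding hcs stepok_def using t'(1) tq eqs d(2) by auto
    then show ?thesis using cs Cons.prems(3,4) False
      by (intro exI[of _ "(p, snd x) # cs"]) (auto simp: fm_def successively_Cons)
  qed
qed

lemma lift_in:
  assumes cov: "in_covering A B \<phi>" and wf: "wf_twa A"
  shows "successively (stepok B w) rs \<Longrightarrow> rs \<noteq> [] \<Longrightarrow> p \<in> states A \<Longrightarrow> \<phi> p = fst (last rs) \<Longrightarrow>
    \<exists>cs. map (fm \<phi>) cs = rs \<and> fst (last cs) = p \<and> (\<forall>c\<in>set cs. fst c \<in> states A)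
       \<and> successively (stepok A w) cs"
proof (induction rs arbitrary: p rule: rev_induct)
  case Nil then show ?case by simp
next
  case (snoc x rs)
  show ?case
  proof (cases "rs = []")
    case True
    then show ?thesis using snoc.prems by (intro exI[of _ "[(p, snd x)]"]) (auto simp: fm_def)
  next
    case False
    define y where "y = last rs"
    from snoc.prems(1) False have st: "stepok B w y x" and sr: "successively (stepok B w) rs"
      by (auto simp: successively_append_iff y_def)
    obtain d where d: "(fst y, letter_at w (snd y), d, fst x) \<in> dom (trans B)"
      "int (snd x) = int (snd y) + dval d" using st unfolding stepok_def by blast
    have "\<phi> p = tgt (fst y, letter_at w (snd y), d, fst x)" using snoc.prems(4) by (simp add: tgt_def)
    note u = incovD3[OF cov, rule_format, OF d(1) snoc.prems(3) this]
    then have "\<exists>t'. t' \<in> dom (trans A) \<and> map_trans \<phi> t' = (fst y, letter_at w (snd y), d, fst x) \<and> tgt t' = p"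
      by (rule ex1_implies_ex)
    then obtain t' where t': "t' \<in> dom (trans A)" "map_trans \<phi> t' = (fst y, letter_at w (snd y), d, fst x)" "tgt t' = p"
      by blast
    obtain q a' d' p' where tq: "t' = (q, a', d', p')" by (cases t') auto
    have eqs: "p' = p" "a' = letter_at w (snd y)" "d' = d" "\<phi> q = fst y"
      using t'(2,3) tq by (auto simp: map_trans_eq tgt_def)
    have qS: "q \<in> states A" using wf_trans_states[OF wf] t'(1) tq by blast
    obtain cs where cs: "map (fm \<phi>) cs = rs" "fst (last cs) = q" "\<forall>c\<in>set cs. fst c \<in> states A"
      "successively (stepok A w) cs" using snoc.IH[OF sr False qS] eqs(4) y_def by auto
    have "cs \<noteq> []" using cs(1) False by auto
    then have hcs: "last cs = (q, snd y)" using cs(1,2) y_def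
      by (metis fm_simps(2) last_map prod.collapse)
    have "stepok A w (last cs) (p, snd x)"
      unfolding hcs stepok_def using t'(1) tq eqs d(2) by auto
    then show ?thesis using cs snoc.prems(3,4) False
      by (intro exI[of _ "cs @ [(p, snd x)]"]) (auto simp: fm_def successively_append_iff)
  qed
qed

lemma step_unique_cov:
  assumes cov: "covering A B \<phi>" and pS: "fst x \<in> states A"
    and s1: "stepok A w x y1" and s2: "stepok A w x y2" and e: "fm \<phi> y1 = fm \<phi> y2"
  shows "y1 = y2"
proof -
  obtain d1 where d1: "(fst x, letter_at w (snd x), d1, fst y1) \<in> dom (trans A)"
      "int (snd y1) = int (snd x) + dval d1" using s1 unfolding stepok_def by blast
  obtain d2 where d2: "(fst x, letter_at w (snd x), d2, fst y2) \<in> dom (trans A)"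
      "int (snd y2) = int (snd x) + dval d2" using s2 unfolding stepok_def by blast
  have sn: "snd y1 = snd y2" "\<phi> (fst y1) = \<phi> (fst y2)" using e by (auto simp: fm_def)
  have dd: "d1 = d2" using d1(2) d2(2) sn dval_inj by auto
  let ?t = "map_trans \<phi> (fst x, letter_at w (snd x), d1, fst y1)"
  have tB: "?t \<in> dom (trans B)" using covD4[OF cov] d1(1) by blast
  have "\<phi> (fst x) = src ?t" by (simp add: src_def map_trans_eq)
  note u = covD3[OF cov, rule_format, OF tB pS this]
  have a1: "(fst x, letter_at w (snd x), d1, fst y1) \<in> dom (trans A) \<and> map_trans \<phi> (fst x, letter_at w (snd x), d1, fst y1) = ?t \<and> src (fst x, letter_at w (snd x), d1, fst y1) = fst x"
    using d1(1) by (simp add: src_def)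
  have a2: "(fst x, letter_at w (snd x), d2, fst y2) \<in> dom (trans A) \<and> map_trans \<phi> (fst x, letter_at w (snd x), d2, fst y2) = ?t \<and> src (fst x, letter_at w (snd x), d2, fst y2) = fst x"
    using d2(1) dd sn by (simp add: src_def map_trans_eq)
  have "(fst x, letter_at w (snd x), d1, fst y1) = (fst x, letter_at w (snd x), d2, fst y2)"
    by (rule ex1_eqD[OF u a1 a2])
  then show ?thesis using sn by (simp add: prod_eq_iff)
qed

lemma step_unique_in:
  assumes cov: "in_covering A B \<phi>" and pS: "fst x \<in> states A"
    and s1: "stepok A w y1 x" and s2: "stepok A w y2 x" and e: "fm \<phi> y1 = fm \<phi> y2"
  shows "y1 = y2"
proof -
  have sn: "snd y1 = snd y2" "\<phi> (fst y1) = \<phi> (fst y2)" using e by (auto simp: fm_def)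
  obtain d1 where d1: "(fst y1, letter_at w (snd y1), d1, fst x) \<in> dom (trans A)"
      "int (snd x) = int (snd y1) + dval d1" using s1 unfolding stepok_def by blast
  obtain d2 where d2: "(fst y2, letter_at w (snd y1), d2, fst x) \<in> dom (trans A)"
      "int (snd x) = int (snd y2) + dval d2" using s2 sn unfolding stepok_def by auto
  have dd: "d1 = d2" using d1(2) d2(2) sn dval_inj by auto
  let ?t = "map_trans \<phi> (fst y1, letter_at w (snd y1), d1, fst x)"
  have tB: "?t \<in> dom (trans B)" using incovD4[OF cov] d1(1) by blast
  have "\<phi> (fst x) = tgt ?t" by (simp add: tgt_def map_trans_eq)
  note u = incovD3[OF cov, rule_format, OF tB pS this]
  have a1: "(fst y1, letter_at w (snd y1), d1, fst x) \<in> dom (trans A) \<and> map_trans \<phi> (fst y1, letter_at w (snd y1), d1, fst x) = ?t \<and> tgt (fst y1, letter_at w (snd y1), d1, fst x) = fst x"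
    using d1(1) by (simp add: tgt_def)
  have a2: "(fst y2, letter_at w (snd y1), d2, fst x) \<in> dom (trans A) \<and> map_trans \<phi> (fst y2, letter_at w (snd y1), d2, fst x) = ?t \<and> tgt (fst y2, letter_at w (snd y1), d2, fst x) = fst x"
    using d2(1) dd sn by (simp add: tgt_def map_trans_eq)
  have "(fst y1, letter_at w (snd y1), d1, fst x) = (fst y2, letter_at w (snd y1), d2, fst x)"
    by (rule ex1_eqD[OF u a1 a2])
  then show ?thesis using sn by (simp add: prod_eq_iff)
qed

lemma uniq_cov:
  assumes cov: "covering A B \<phi>"
  shows "successively (stepok A w) cs1 \<Longrightarrow> successively (stepok A w) cs2 \<Longrightarrow>
    \<forall>c\<in>set cs1. fst c \<in> states A \<Longrightarrow> map (fm \<phi>) cs1 = map (fm \<phi>) cs2 \<Longrightarrow> hd cs1 = hd cs2 \<Longrightarrow> cs1 = cs2"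
proof (induction cs1 arbitrary: cs2)
  case Nil then show ?case by simp
next
  case (Cons x xs)
  obtain ys where c2: "cs2 = x # ys" using Cons.prems(4,5) by (cases cs2) auto
  show ?case
  proof (cases xs)
    case Nil then show ?thesis using Cons.prems(4) c2 by simp
  next
    case (Cons x1 xs')
    then obtain y1 ys' where ys: "ys = y1 # ys'" using \<open>map (fm \<phi>) (x # xs) = map (fm \<phi>) cs2\<close> c2
      by (cases ys) auto
    have "x1 = y1"
      using step_unique_cov[OF cov, of x w x1 y1] Cons.prems c2 ys Cons by auto
    then have "xs = ys"
      using Cons.IH[of ys] Cons.prems c2 ys Cons by (auto simp: successively_Cons)
    then show ?thesis using c2 by simp
  qed
qed

lemma uniq_in:
  assumes cov: "in_covering A B \<phi>"
  shows "successively (stepok A w) cs1 \<Longrightarrow> successively (stepok A w) cs2 \<Longrightarrow>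
    \<forall>c\<in>set cs1. fst c \<in> states A \<Longrightarrow> map (fm \<phi>) cs1 = map (fm \<phi>) cs2 \<Longrightarrow> last cs1 = last cs2 \<Longrightarrow> cs1 = cs2"
proof (induction cs1 arbitrary: cs2 rule: rev_induct)
  case Nil then show ?case by simp
next
  case (snoc x xs)
  have l2: "length cs2 = Suc (length xs)" using snoc.prems(4) by (metis length_map length_append_singleton)
  then obtain ys y where c2': "cs2 = ys @ [y]" by (metis length_Suc_conv_rev)
  then have c2: "cs2 = ys @ [x]" using snoc.prems(5) by simp
  have mm: "map (fm \<phi>) xs = map (fm \<phi>) ys" using snoc.prems(4) c2 by simp
  show ?case
  proof (cases "xs = []")
    case True then show ?thesis using mm c2 by simp
  next
    case False
    then have yn: "ys \<noteq> []" using mm by auto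
    have s1: "stepok A w (last xs) x" using snoc.prems(1) False by (simp add: successively_append_iff)
    have s2: "stepok A w (last ys) x" using snoc.prems(2) c2 yn by (simp add: successively_append_iff)
    have "fm \<phi> (last xs) = fm \<phi> (last ys)" using mm False yn by (metis last_map)
    then have "last xs = last ys"
      using step_unique_in[OF cov _ s1 s2] snoc.prems(3) by simp
    then have "xs = ys"
      using snoc.IH[of ys] snoc.prems c2 mm by (auto simp: successively_append_iff)
    then show ?thesis using c2 by simp
  qed
qed


lemma covD:
  assumes "covering A B \<phi>"
  shows "\<forall>r\<in>dom (fin B). {p\<in>states A. \<phi> p = r} \<subseteq> dom (fin A)"
    "\<forall>r\<in>dom (init B). \<exists>!p. p \<in> states A \<and> \<phi> p = r \<and> p \<in> dom (init A)"
  using assms unfolding covering_def by simp_all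

lemma incovD:
  assumes "in_covering A B \<phi>"
  shows "\<forall>r\<in>dom (init B). {p\<in>states A. \<phi> p = r} \<subseteq> dom (init A)"
    "\<forall>r\<in>dom (fin B). \<exists>!p. p \<in> states A \<and> \<phi> p = r \<and> p \<in> dom (fin A)"
  using assms unfolding in_covering_def by simp_all

theorem mainTheorem2:
  fixes \<A> :: "('q, 'a, 'k::semiring_1) twa" and \<B> :: "('r, 'a, 'k) twa" and \<phi> :: "'q \<Rightarrow> 'r"
  assumes "wf_twa \<A>" and "wf_twa \<B>" and "alph \<A> = alph \<B>"
    and "covering \<A> \<B> \<phi> \<or> in_covering \<A> \<B> \<phi>"
  shows "bij_betw (comp_image \<phi>) (comps \<A>) (comps \<B>)
    \<and> (\<forall>c\<in>comps \<A>. label (comp_image \<phi> c) = label c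
                     \<and> weight \<B> (comp_image \<phi> c) = weight \<A> c)"
proof -
  have sm: "surj_morphism \<A> \<B> \<phi>" using assms(4) unfolding covering_def in_covering_def by (elim disjE conjE)
  then have mor: "is_morphism \<A> \<B> \<phi>" unfolding surj_morphism_def by simp
  have minit: "\<forall>p\<in>dom (init \<A>). init \<B> (\<phi> p) = init \<A> p"
     and mfin: "\<forall>p\<in>dom (fin \<A>). fin \<B> (\<phi> p) = fin \<A> p"
    using mor unfolding is_morphism_def by auto
  have part2: "\<forall>c\<in>comps \<A>. label (comp_image \<phi> c) = label c
                     \<and> weight \<B> (comp_image \<phi> c) = weight \<A> c"
  proof
    fix c assume "c \<in> comps \<A>"
    then obtain w cs where c: "c = (w, cs)" "is_comp \<A> w cs" unfolding comps_def by auto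
    show "label (comp_image \<phi> c) = label c \<and> weight \<B> (comp_image \<phi> c) = weight \<A> c"
      using c weight_eq[OF mor c(2)] by (simp add: comp_image_eq label_def)
  qed
  have sub: "comp_image \<phi> ` comps \<A> \<subseteq> comps \<B>"
  proof
    fix c' assume "c' \<in> comp_image \<phi> ` comps \<A>"
    then obtain w cs where c: "c' = comp_image \<phi> (w, cs)" "is_comp \<A> w cs" unfolding comps_def by auto
    show "c' \<in> comps \<B>" using comp_into[OF mor c(2) assms(3)] c(1)
      by (simp add: comps_def comp_image_eq)
  qed
  have inj: "inj_on (comp_image \<phi>) (comps \<A>)"
  proof (rule inj_onI)
    fix c1 c2 assume c1: "c1 \<in> comps \<A>" and c2: "c2 \<in> comps \<A>" and e: "comp_image \<phi> c1 = comp_image \<phi> c2"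
    obtain w1 cs1 where c1': "c1 = (w1, cs1)" "is_comp \<A> w1 cs1" using c1 unfolding comps_def by auto
    obtain w2 cs2 where c2': "c2 = (w2, cs2)" "is_comp \<A> w2 cs2" using c2 unfolding comps_def by auto
    have ww: "w1 = w2" and mm: "map (fm \<phi>) cs1 = map (fm \<phi>) cs2"
      using e c1' c2' by (auto simp: comp_image_eq)
    have ne1: "cs1 \<noteq> []" and ne2: "cs2 \<noteq> []" using is_compD(2) c1'(2) c2'(2) by auto
    have ph: "\<phi> (fst (hd cs1)) = \<phi> (fst (hd cs2))" "\<phi> (fst (last cs1)) = \<phi> (fst (last cs2))"
      "snd (hd cs1) = snd (hd cs2)" "snd (last cs1) = snd (last cs2)"
      using arg_cong[OF mm, of hd] arg_cong[OF mm, of last] hd_fm[OF ne1, of \<phi>] hd_fm[OF ne2, of \<phi>]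
        last_fm[OF ne1, of \<phi>] last_fm[OF ne2, of \<phi>] by auto
    have S1: "successively (stepok \<A> w1) cs1" using is_compD(9)[OF c1'(2)] .
    have S2: "successively (stepok \<A> w1) cs2" using is_compD(9)[OF c2'(2)] ww by simp
    have St: "\<forall>c\<in>set cs1. fst c \<in> states \<A>" using is_compD(3)[OF c1'(2)] .
    have "cs1 = cs2"
      using assms(4)
    proof
      assume cov: "covering \<A> \<B> \<phi>"
      have r: "\<phi> (fst (hd cs1)) \<in> dom (init \<B>)" using minit is_compD(7)[OF c1'(2)] by (auto simp: domIff)
      have u: "\<exists>!p. p \<in> states \<A> \<and> \<phi> p = \<phi> (fst (hd cs1)) \<and> p \<in> dom (init \<A>)"
        using covD(2)[OF cov] r by blast
      have a1: "fst (hd cs1) \<in> states \<A> \<and> \<phi> (fst (hd cs1)) = \<phi> (fst (hd cs1)) \<and> fst (hd cs1) \<in> dom (init \<A>)"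
        using hd_states[OF c1'(2)] is_compD(7)[OF c1'(2)] by simp
      have a2: "fst (hd cs2) \<in> states \<A> \<and> \<phi> (fst (hd cs2)) = \<phi> (fst (hd cs1)) \<and> fst (hd cs2) \<in> dom (init \<A>)"
        using hd_states[OF c2'(2)] is_compD(7)[OF c2'(2)] ph(1) by simp
      have "fst (hd cs1) = fst (hd cs2)" using ex1_eqD[OF u a1 a2] .
      then have "hd cs1 = hd cs2" using ph(3) by (simp add: prod_eq_iff)
      then show ?thesis using uniq_cov[OF cov S1 S2 St mm] by simp
    next
      assume cov: "in_covering \<A> \<B> \<phi>"
      have r: "\<phi> (fst (last cs1)) \<in> dom (fin \<B>)" using mfin is_compD(8)[OF c1'(2)] by (auto simp: domIff)
      have u: "\<exists>!p. p \<in> states \<A> \<and> \<phi> p = \<phi> (fst (last cs1)) \<and> p \<in> dom (fin \<A>)"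
        using incovD(2)[OF cov] r by blast
      have a1: "fst (last cs1) \<in> states \<A> \<and> \<phi> (fst (last cs1)) = \<phi> (fst (last cs1)) \<and> fst (last cs1) \<in> dom (fin \<A>)"
        using last_states[OF c1'(2)] is_compD(8)[OF c1'(2)] by simp
      have a2: "fst (last cs2) \<in> states \<A> \<and> \<phi> (fst (last cs2)) = \<phi> (fst (last cs1)) \<and> fst (last cs2) \<in> dom (fin \<A>)"
        using last_states[OF c2'(2)] is_compD(8)[OF c2'(2)] ph(2) by simp
      have "fst (last cs1) = fst (last cs2)" using ex1_eqD[OF u a1 a2] .
      then have "last cs1 = last cs2" using ph(4) by (simp add: prod_eq_iff)
      then show ?thesis using uniq_in[OF cov S1 S2 St mm] by simp
    qed
    then show "c1 = c2" using c1' c2' ww by simp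
  qed
  have sup: "comps \<B> \<subseteq> comp_image \<phi> ` comps \<A>"
  proof
    fix c assume "c \<in> comps \<B>"
    then obtain w rs where c: "c = (w, rs)" "is_comp \<B> w rs" unfolding comps_def by auto
    have rne: "rs \<noteq> []" and Sr: "successively (stepok \<B> w) rs" using is_compD(2,9)[OF c(2)] by auto
    have rhi: "fst (hd rs) \<in> dom (init \<B>)" and rlf: "fst (last rs) \<in> dom (fin \<B>)"
      using is_compD(7,8)[OF c(2)] by auto
    have "\<exists>cs. map (fm \<phi>) cs = rs \<and> (\<forall>c\<in>set cs. fst c \<in> states \<A>)
       \<and> successively (stepok \<A> w) cs \<and> fst (hd cs) \<in> dom (init \<A>) \<and> fst (last cs) \<in> dom (fin \<A>)"
      using assms(4)
    proof
      assume cov: "covering \<A> \<B> \<phi>"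
      have "\<exists>!p. p \<in> states \<A> \<and> \<phi> p = fst (hd rs) \<and> p \<in> dom (init \<A>)"
        using covD(2)[OF cov] rhi by blast
      then obtain p where p: "p \<in> states \<A>" "\<phi> p = fst (hd rs)" "p \<in> dom (init \<A>)" by blast
      obtain cs where cs: "map (fm \<phi>) cs = rs" "fst (hd cs) = p" "\<forall>c\<in>set cs. fst c \<in> states \<A>"
        "successively (stepok \<A> w) cs" using lift_cov[OF cov assms(1) Sr rne p(1,2)] by blast
      have ne: "cs \<noteq> []" using cs(1) rne by auto
      then have l: "\<phi> (fst (last cs)) = fst (last rs)" "fst (last cs) \<in> states \<A>"
        using cs(1,3) last_fm[OF ne, of \<phi>] by auto
      have "\<forall>r\<in>dom (fin \<B>). {p\<in>states \<A>. \<phi> p = r} \<subseteq> dom (fin \<A>)" using covD(1)[OF cov] .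
      then have "fst (last cs) \<in> dom (fin \<A>)" using rlf l by blast
      then show ?thesis using cs p by blast
    next
      assume cov: "in_covering \<A> \<B> \<phi>"
      have "\<exists>!p. p \<in> states \<A> \<and> \<phi> p = fst (last rs) \<and> p \<in> dom (fin \<A>)"
        using incovD(2)[OF cov] rlf by blast
      then obtain p where p: "p \<in> states \<A>" "\<phi> p = fst (last rs)" "p \<in> dom (fin \<A>)" by blast
      obtain cs where cs: "map (fm \<phi>) cs = rs" "fst (last cs) = p" "\<forall>c\<in>set cs. fst c \<in> states \<A>"
        "successively (stepok \<A> w) cs" using lift_in[OF cov assms(1) Sr rne p(1,2)] by blast
      have ne: "cs \<noteq> []" using cs(1) rne by auto
      then have l: "\<phi> (fst (hd cs)) = fst (hd rs)" "fst (hd cs) \<in> states \<A>"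
        using cs(1,3) hd_fm[OF ne, of \<phi>] by auto
      have "\<forall>r\<in>dom (init \<B>). {p\<in>states \<A>. \<phi> p = r} \<subseteq> dom (init \<A>)" using incovD(1)[OF cov] .
      then have "fst (hd cs) \<in> dom (init \<A>)" using rhi l by blast
      then show ?thesis using cs p by blast
    qed
    then obtain cs where cs: "map (fm \<phi>) cs = rs" "\<forall>c\<in>set cs. fst c \<in> states \<A>"
       "successively (stepok \<A> w) cs" "fst (hd cs) \<in> dom (init \<A>)" "fst (last cs) \<in> dom (fin \<A>)"
      by blast
    have ne: "cs \<noteq> []" using cs(1) rne by auto
    have bnd: "\<forall>c\<in>set rs. snd c \<le> length w + 1" using is_compD(4)[OF c(2)] .
    have "\<forall>c\<in>set cs. snd c \<le> length w + 1"
    proof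
      fix x assume "x \<in> set cs"
      then have "fm \<phi> x \<in> set rs" using cs(1) by auto
      then show "snd x \<le> length w + 1" using bnd by fastforce
    qed
    moreover have "snd (hd cs) = 1" "snd (last cs) = length w + 1"
      using is_compD(5,6)[OF c(2)] cs(1) hd_fm[OF ne, of \<phi>] last_fm[OF ne, of \<phi>] by auto
    moreover have "set w \<subseteq> alph \<A>" using is_compD(1)[OF c(2)] assms(3) by simp
    ultimately have b: "\<forall>c\<in>set cs. snd c \<le> length w + 1" "snd (hd cs) = 1" "snd (last cs) = length w + 1"
       "set w \<subseteq> alph \<A>" by blast+
    have "is_comp \<A> w cs" using b cs(2,3,4,5) ne unfolding is_comp_alt ball_conj_distrib
      by - (intro conjI, assumption+)
    then have "(w, cs) \<in> comps \<A>" by (simp add: comps_def)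
    moreover have "c = comp_image \<phi> (w, cs)" by (simp add: comp_image_eq c(1) cs(1))
    ultimately show "c \<in> comp_image \<phi> ` comps \<A>" by (rule image_eqI[rotated])
  qed
  have eq: "comp_image \<phi> ` comps \<A> = comps \<B>" using sub sup by (rule subset_antisym)
  show ?thesis by (rule conjI[OF bij_betw_imageI[OF inj eq] part2])
qed

end
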